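(* Let $X,Y$ be complex Banach spaces, $\emptyset\ne I\subseteq\mathbb R^n$, let $\mathcal B$ be a non-empty collection of non-empty subsets of $X$ such that every $x\in X$ belongs to some $B\in\mathcal B$, and let $\mathrm R$ be a non-empty collection of sequences in $\mathbb R^n$ such that $\mathbf t+\mathbf b(l)\in I$ whenever $\mathbf t\in I$, $\mathbf b\in\mathrm R$, $l\in\mathbb N$. Suppose that $F:I\times X\to Y$ is $(\mathrm R,\mathcal B)$-multi-almost periodic, $a\ge 0$ and $x\in X$. If there exists a sequence $\mathbf b(\cdot)$ in $\mathrm R$ all of whose subsequences are unbounded and such that $\mathbf T-\mathbf b(l)\in I$ whenever $\mathbf T\in I$ and $l\in\mathbb N$, then $$\sup_{\mathbf t\in I}\|F(\mathbf t;x)\|_Y=\sup_{\mathbf t\in I,\ |\mathbf t|\ge a}\|F(\mathbf t;x)\|_Y.$$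
   Context: A continuous function $F:I\times X\to Y$ is called $(\mathrm R,\mathcal B)$-multi-almost periodic if for every $B\in\mathcal B$ and every sequence $(\mathbf b_k)\in\mathrm R$ there exist a subsequence $(\mathbf b_{k_l})$ of $(\mathbf b_k)$ and a function $F^\ast:I\times X\to Y$ such that $\lim_{l\to\infty}F(\mathbf t+\mathbf b_{k_l};x)=F^\ast(\mathbf t;x)$ uniformly for $x\in B$ and $\mathbf t\in I$. $|\cdot|$ denotes the Euclidean norm. *)

theory Defs
  imports "HOL-Analysis.Analysis"
begin

definition multi_almost_periodic ::
  "(nat \<Rightarrow> real^'n) set \<Rightarrow> 'x set set \<Rightarrow> (real^'n) set
     \<Rightarrow> (real^'n \<Rightarrow> 'x::real_normed_vector \<Rightarrow> 'y::real_normed_vector) \<Rightarrow> bool" where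
  "multi_almost_periodic R \<B> I F \<longleftrightarrow>
     continuous_on (I \<times> UNIV) (\<lambda>(t, x). F t x) \<and>
     (\<forall>B\<in>\<B>. \<forall>b\<in>R. \<exists>r::nat \<Rightarrow> nat. strict_mono r \<and>
        (\<exists>Fs :: real^'n \<Rightarrow> 'x \<Rightarrow> 'y. \<forall>\<epsilon>>0. \<exists>N. \<forall>l\<ge>N. \<forall>t\<in>I. \<forall>x\<in>B.
            dist (F (t + b (r l)) x) (Fs t x) < \<epsilon>))"

end

theory Submission
  imports Defs
begin

theorem proposition2p6:
  fixes I :: "(real^'n) set"
    and \<B> :: "'x::banach set set"
    and R :: "(nat \<Rightarrow> real^'n) set"
    and F :: "real^'n \<Rightarrow> 'x \<Rightarrow> 'y::banach"
    and a :: real and x :: 'x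
  assumes "I \<noteq> {}"
    and "\<B> \<noteq> {}" and "\<forall>B\<in>\<B>. B \<noteq> {}" and "\<forall>y. \<exists>B\<in>\<B>. y \<in> B"
    and "R \<noteq> {}"
    and "\<forall>t\<in>I. \<forall>b\<in>R. \<forall>l. t + b l \<in> I"
    and "multi_almost_periodic R \<B> I F"
    and "a \<ge> 0"
    and "\<exists>b\<in>R. (\<forall>r::nat \<Rightarrow> nat. strict_mono r \<longrightarrow> \<not> bounded (range (b \<circ> r)))
                 \<and> (\<forall>T\<in>I. \<forall>l. T - b l \<in> I)"
  shows "(SUP t\<in>I. ereal (norm (F t x))) = (SUP t\<in>{t\<in>I. norm t \<ge> a}. ereal (norm (F t x)))"
proof (rule antisym)
  show "(SUP t\<in>{t\<in>I. norm t \<ge> a}. ereal (norm (F t x))) \<le> (SUP t\<in>I. ereal (norm (F t x)))"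
    by (rule SUP_subset_mono) auto
next
  let ?S = "(SUP t\<in>{t\<in>I. norm t \<ge> a}. ereal (norm (F t x)))"
  obtain b where bR: "b \<in> R" and unb: "\<And>r::nat \<Rightarrow> nat. strict_mono r \<Longrightarrow> \<not> bounded (range (b \<circ> r))"
    and minus: "\<And>T l. T \<in> I \<Longrightarrow> T - b l \<in> I" using assms(9) by blast
  obtain B where B: "B \<in> \<B>" "x \<in> B" using assms(4) by blast
  obtain r :: "nat \<Rightarrow> nat" and Fs :: "real^'n \<Rightarrow> 'x \<Rightarrow> 'y" where r: "strict_mono r"
    and conv: "\<And>e. e > 0 \<Longrightarrow> \<exists>N. \<forall>l\<ge>N. \<forall>t\<in>I. \<forall>x\<in>B. dist (F (t + b (r l)) x) (Fs t x) < e"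
  proof -
    have "\<forall>B\<in>\<B>. \<forall>b\<in>R. \<exists>r::nat \<Rightarrow> nat. strict_mono r \<and>
        (\<exists>Fs :: real^'n \<Rightarrow> 'x \<Rightarrow> 'y. \<forall>\<epsilon>>0. \<exists>N. \<forall>l\<ge>N. \<forall>t\<in>I. \<forall>x\<in>B.
            dist (F (t + b (r l)) x) (Fs t x) < \<epsilon>)"
      using assms(7) unfolding multi_almost_periodic_def by (rule conjunct2)
    then have "\<exists>r::nat \<Rightarrow> nat. strict_mono r \<and>
        (\<exists>Fs :: real^'n \<Rightarrow> 'x \<Rightarrow> 'y. \<forall>\<epsilon>>0. \<exists>N. \<forall>l\<ge>N. \<forall>t\<in>I. \<forall>x\<in>B.
            dist (F (t + b (r l)) x) (Fs t x) < \<epsilon>)" using B(1) bR by blast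
    then show ?thesis using that by blast
  qed
  show "(SUP t\<in>I. ereal (norm (F t x))) \<le> ?S"
  proof (rule SUP_least)
    fix t0 assume t0: "t0 \<in> I"
    show "ereal (norm (F t0 x)) \<le> ?S"
    proof (rule ereal_le_epsilon2)
      fix e :: real assume e: "e > 0"
      obtain N where N: "\<And>l t y. l \<ge> N \<Longrightarrow> t \<in> I \<Longrightarrow> y \<in> B \<Longrightarrow> dist (F (t + b (r l)) y) (Fs t y) < e/2"
        using conv[of "e/2"] e by auto
      define t where "t = t0 - b (r N)"
      have tI: "t \<in> I" using minus t0 t_def by blast
      have sm: "strict_mono (\<lambda>l. r (l + N))" using r unfolding strict_mono_def by simp
      have "\<not> bounded (range (b \<circ> (\<lambda>l. r (l + N))))" by (rule unb[OF sm])
      then have "\<exists>y\<in>range (b \<circ> (\<lambda>l. r (l + N))). \<not> norm y \<le> a + norm t"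
        unfolding bounded_iff by blast
      then obtain l where "\<not> norm (b (r (l + N))) \<le> a + norm t" by auto
      hence l: "norm (b (r (l + N))) > a + norm t" by linarith
      define t' where "t' = t + b (r (l + N))"
      have t'I: "t' \<in> I" using assms(6) tI bR t'_def by blast
      have "norm (b (r (l + N))) \<le> norm t' + norm t"
        using norm_triangle_ineq4[of t' t] unfolding t'_def by simp
      hence t'a: "norm t' \<ge> a" using l by linarith
      have d1: "dist (F t' x) (Fs t x) < e/2" using N[of "l+N" t x] tI B unfolding t'_def by simp
      have d2: "dist (F t0 x) (Fs t x) < e/2" using N[of N t x] tI B unfolding t_def by simp
      have "norm (F t0 x) \<le> norm (F t' x) + dist (F t0 x) (F t' x)"
        using norm_triangle_ineq2[of "F t0 x" "F t' x"] by (simp add: dist_norm)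
      also have "dist (F t0 x) (F t' x) < e" using dist_triangle_half_l[OF d2 d1] .
      finally have le: "norm (F t0 x) \<le> norm (F t' x) + e" by simp
      have "ereal (norm (F t' x)) \<le> ?S" by (rule SUP_upper) (use t'I t'a in auto)
      hence "ereal (norm (F t' x)) + ereal e \<le> ?S + ereal e" by (rule add_right_mono)
      moreover have "ereal (norm (F t0 x)) \<le> ereal (norm (F t' x)) + ereal e" using le by simp
      ultimately show "ereal (norm (F t0 x)) \<le> ?S + ereal e" by (rule order_trans[rotated])
    qed
  qed
qed

end
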